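(* Let $\tau$ be a $T_1$-topology on $\mathcal{C}(p,q)$ such that $(\mathcal{C}(p,q),\tau)$ is a topological inverse semigroup. If there exists an idempotent $q^ip^i\in\mathcal{C}(p,q)$ such that the subspace $E(\mathcal{C}(p,q))$ is quasi-regular at $q^ip^i$, then $\tau$ is discrete.
   Context: The bicyclic monoid $\mathcal{C}(p,q)$ is the monoid generated by $p,q$ subject only to $pq=1$; elements are uniquely $q^ip^j$, $i,j\in\omega$, with multiplication $q^kp^l\cdot q^mp^n = q^{k-l+m}p^n$ if $l<m$, $=q^kp^n$ if $l=m$, $=q^kp^{l-m+n}$ if $l>m$, and inversion $(q^ip^j)^{-1}=q^jp^i$. $E(\mathcal{C}(p,q))=\{q^ip^i:i\in\omega\}$ is the set of idempotents. A topological inverse semigroup: multiplication jointly continuous and inversion continuous. A subspace $Y$ is quasi-regular at $x\in Y$ if for every open neighbourhood $U$ of $x$ in $Y$ there is a nonempty open $V\subseteq Y$ with $\mathrm{cl}_Y(V)\subseteq U$. *)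

theory Defs
  imports "HOL-Analysis.Analysis"
begin

text \<open>The bicyclic monoid C(p,q): the element q^i p^j is represented by the pair (i,j).\<close>

type_synonym bicyclic = "nat \<times> nat"

definition bmult :: "bicyclic \<Rightarrow> bicyclic \<Rightarrow> bicyclic" where
  "bmult x y = (case x of (k,l) \<Rightarrow> case y of (m,n) \<Rightarrow>
     if l < m then (k + m - l, n)
     else if l = m then (k, n)
     else (k, l - m + n))"

definition binv :: "bicyclic \<Rightarrow> bicyclic" where
  "binv x = (case x of (i,j) \<Rightarrow> (j,i))"

definition bidem :: "bicyclic set" where
  "bidem = {(i,i) | i. True}"

definition top_inverse_semigroup_bicyclic :: "bicyclic topology \<Rightarrow> bool" where
  "top_inverse_semigroup_bicyclic T \<longleftrightarrow>
     topspace T = UNIV \<and>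
     continuous_map (prod_topology T T) T (\<lambda>z. bmult (fst z) (snd z)) \<and>
     continuous_map T T binv"

definition quasi_regular_at :: "'a topology \<Rightarrow> 'a set \<Rightarrow> 'a \<Rightarrow> bool" where
  "quasi_regular_at X Y x \<longleftrightarrow>
     (\<forall>U. openin (subtopology X Y) U \<and> x \<in> U \<longrightarrow>
        (\<exists>V. openin (subtopology X Y) V \<and> V \<noteq> {} \<and>
             (subtopology X Y) closure_of V \<subseteq> U))"

end

theory Submission
  imports Defs
begin

lemma cont_mult:
  assumes "top_inverse_semigroup_bicyclic T"
    and "continuous_map T T f" and "continuous_map T T g"
  shows "continuous_map T T (\<lambda>x. bmult (f x) (g x))"
proof -
  have m: "continuous_map (prod_topology T T) T (\<lambda>z. bmult (fst z) (snd z))"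
    using assms(1) unfolding top_inverse_semigroup_bicyclic_def by blast
  have "continuous_map T (prod_topology T T) (\<lambda>x. (f x, g x))"
    using assms(2,3) by (simp add: continuous_map_paired)
  from continuous_map_compose[OF this m] show ?thesis by (simp add: o_def)
qed

lemma cont_transl:
  assumes "top_inverse_semigroup_bicyclic T"
  shows "continuous_map T T (\<lambda>x. bmult a (bmult x c))"
proof -
  have top: "topspace T = UNIV" using assms unfolding top_inverse_semigroup_bicyclic_def by blast
  have c1: "continuous_map T T (\<lambda>x. bmult x c)"
    using cont_mult[OF assms, of "\<lambda>x. x" "\<lambda>x. c"] top by simp
  show ?thesis
    using cont_mult[OF assms, of "\<lambda>x. a" "\<lambda>x. bmult x c", OF _ c1] top by simp
qed

lemma preimage_open:
  assumes "top_inverse_semigroup_bicyclic T" "continuous_map T T f" "openin T W"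
  shows "openin T {x. f x \<in> W}"
proof -
  have top: "topspace T = UNIV" using assms unfolding top_inverse_semigroup_bicyclic_def by blast
  show ?thesis using assms(2,3) unfolding continuous_map_def top by simp
qed

lemma shift_eq: "bmult (k,0) (bmult (a,b) (0,k)) = (a+k, b+k)"
  by (auto simp: bmult_def)

lemma h_eq: "bmult (0,1) (bmult x (1,0)) = (0,0) \<longleftrightarrow> x = (0,0) \<or> x = (1,1)"
  by (cases x) (auto simp: bmult_def split: if_splits)

lemma f_eq: "bmult (0,m) (bmult x (n,0)) = (1,1) \<longleftrightarrow> x = (1+m,1+n)"
  by (cases x) (auto simp: bmult_def split: if_splits)

lemma shift_open:
  assumes "top_inverse_semigroup_bicyclic T" "openin T {(a+k,b+k)}"
  shows "openin T {(a,b)}"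
proof -
  have "openin T {x. bmult (k,0) (bmult x (0,k)) \<in> {(a+k,b+k)}}"
    by (rule preimage_open[OF assms(1) cont_transl[OF assms(1)] assms(2)])
  moreover have "{x. bmult (k,0) (bmult x (0,k)) \<in> {(a+k,b+k)}} = {(a,b)}"
    using shift_eq by auto
  ultimately show ?thesis by simp
qed

lemma all_open:
  assumes "t1_space T" "top_inverse_semigroup_bicyclic T" "openin T {(0,0)}"
  shows "openin T {(a,b)}"
proof -
  have top: "topspace T = UNIV" using assms unfolding top_inverse_semigroup_bicyclic_def by blast
  have "openin T {x. bmult (0,1) (bmult x (1,0)) \<in> {(0,0)}}"
    by (rule preimage_open[OF assms(2) cont_transl[OF assms(2)] assms(3)])
  moreover have "{x. bmult (0,1) (bmult x (1,0)) \<in> {(0,0)}} = {(0,0),(1,1)}"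
    using h_eq by auto
  ultimately have o2: "openin T {(0,0),(1,1)}" by simp
  have "closedin T {(0,0)}" using assms(1) top unfolding t1_space_closedin_singleton by simp
  from openin_diff[OF o2 this] have o0: "openin T ({(0,0),(1,1)} - {(0,0)})" .
  have "{(0,0),(1,1)} - {(0,0)} = {(1,1::nat)}" by auto
  with o0 have o1: "openin T {(1,1)}" by simp
  have "openin T {x. bmult (0,a) (bmult x (b,0)) \<in> {(1,1)}}"
    by (rule preimage_open[OF assms(2) cont_transl[OF assms(2)] o1])
  moreover have "{x. bmult (0,a) (bmult x (b,0)) \<in> {(1,1)}} = {(1+a,1+b)}"
    using f_eq by auto
  ultimately have "openin T {(a+1,b+1)}" by (simp add: add.commute)
  then show ?thesis by (rule shift_open[OF assms(2)])
qed

lemma E_isolated: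
  assumes "t1_space T" "top_inverse_semigroup_bicyclic T" "openin T W" "W \<inter> bidem = {(k,k)}"
  shows "openin T {(k,k)}"
proof -
  have top: "topspace T = UNIV" and inv: "continuous_map T T binv"
    using assms unfolding top_inverse_semigroup_bicyclic_def by blast+
  have idc: "continuous_map T T (\<lambda>x. x)" by simp
  have r: "continuous_map T T (\<lambda>x. bmult x (binv x))"
    by (rule cont_mult[OF assms(2) idc inv])
  have l: "continuous_map T T (\<lambda>x. bmult (binv x) x)"
    by (rule cont_mult[OF assms(2) inv idc])
  have o1: "openin T {x. bmult x (binv x) \<in> W}" by (rule preimage_open[OF assms(2) r assms(3)])
  have o2: "openin T {x. bmult (binv x) x \<in> W}" by (rule preimage_open[OF assms(2) l assms(3)])
  have eq1: "bmult (a,b) (binv (a,b)) = (a,a)" for a b by (simp add: bmult_def binv_def)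
  have eq2: "bmult (binv (a,b)) (a,b) = (b,b)" for a b by (simp add: bmult_def binv_def)
  have mem: "(j,j) \<in> W \<longleftrightarrow> j = k" for j
    using assms(4) unfolding bidem_def by blast
  have "{x. bmult x (binv x) \<in> W} \<inter> {x. bmult (binv x) x \<in> W} = {(k,k)}"
  proof (rule set_eqI)
    fix x show "x \<in> {x. bmult x (binv x) \<in> W} \<inter> {x. bmult (binv x) x \<in> W} \<longleftrightarrow> x \<in> {(k,k)}"
      by (cases x) (simp add: eq1 eq2 mem)
  qed
  with openin_Int[OF o1 o2] show ?thesis by simp
qed

lemma infinite_nbhd:
  assumes "t1_space T" "top_inverse_semigroup_bicyclic T"
    and noiso: "\<forall>k. \<not> openin T {(k,k)}"
    and "openin T W" "(k,k) \<in> W"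
  shows "\<exists>n\<ge>N. (n,n) \<in> W"
proof (rule ccontr)
  assume "\<not> ?thesis"
  hence sm: "\<forall>n. (n,n) \<in> W \<longrightarrow> n < N" by (meson not_le)
  have top: "topspace T = UNIV" using assms unfolding top_inverse_semigroup_bicyclic_def by blast
  let ?F = "(\<lambda>j. (j,j)) ` ({..<N} - {k})"
  have "closedin T ?F" using assms(1) top unfolding t1_space_closedin_finite by simp
  from openin_diff[OF assms(4) this] have "openin T (W - ?F)" .
  moreover have "(W - ?F) \<inter> bidem = {(k,k)}"
    using sm assms(5) unfolding bidem_def by auto
  ultimately have "openin T {(k,k)}" by (rule E_isolated[OF assms(1,2)])
  with noiso show False by blast
qed

theorem proposition4:
  fixes T :: "bicyclic topology"
  assumes "t1_space T"
    and "top_inverse_semigroup_bicyclic T"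
    and "\<exists>i. quasi_regular_at T bidem (i, i)"
  shows "T = discrete_topology UNIV"
proof -
  have top: "topspace T = UNIV" and m: "continuous_map (prod_topology T T) T (\<lambda>z. bmult (fst z) (snd z))"
    using assms(2) unfolding top_inverse_semigroup_bicyclic_def by blast+
  have "\<exists>k. openin T {(k,k)}"
  proof (rule ccontr)
    assume "\<not> ?thesis"
    hence noiso: "\<forall>k. \<not> openin T {(k,k)}" by blast
    obtain i where qr: "quasi_regular_at T bidem (i,i)" using assms(3) by blast
    define mm where "mm = Suc i"
    have "closedin T {(mm,mm)}" using assms(1) top unfolding t1_space_closedin_singleton by simp
    hence oU: "openin T (UNIV - {(mm,mm)})" using top by (simp add: closedin_def)
    have "openin (subtopology T bidem) ((UNIV - {(mm,mm)}) \<inter> bidem)"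
      using oU unfolding openin_subtopology by blast
    moreover have "(i,i) \<in> (UNIV - {(mm,mm)}) \<inter> bidem" unfolding bidem_def mm_def by auto
    ultimately obtain V where V: "openin (subtopology T bidem) V" "V \<noteq> {}"
      "(subtopology T bidem) closure_of V \<subseteq> (UNIV - {(mm,mm)}) \<inter> bidem"
      using qr unfolding quasi_regular_at_def by blast
    obtain OV where OV: "openin T OV" "V = OV \<inter> bidem" using V(1) unfolding openin_subtopology by blast
    obtain v0 where "v0 \<in> V" using V(2) by blast
    then obtain j where "(j,j) \<in> OV" using OV(2) unfolding bidem_def by auto
    then obtain v where v: "v \<ge> mm" "(v,v) \<in> OV"
      using infinite_nbhd[OF assms(1,2) noiso OV(1), of j mm] by blast
    have "(mm,mm) \<notin> (UNIV - {(mm,mm)}) \<inter> bidem" by simp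
    hence "(mm,mm) \<notin> (subtopology T bidem) closure_of V" using V(3) by (meson subsetD)
    moreover have "(mm,mm) \<in> topspace (subtopology T bidem)" using top unfolding bidem_def by auto
    ultimately have "\<not> (\<forall>T'. (mm,mm) \<in> T' \<and> openin (subtopology T bidem) T' \<longrightarrow> (\<exists>y. y \<in> V \<and> y \<in> T'))"
      unfolding in_closure_of by simp
    then obtain N' where N': "(mm,mm) \<in> N'" "openin (subtopology T bidem) N'"
      "\<forall>y. y \<in> V \<longrightarrow> y \<notin> N'"
      by blast
    obtain N where N: "openin T N" "N' = N \<inter> bidem" using N'(2) unfolding openin_subtopology by blast
    have "openin (prod_topology T T) {z \<in> topspace (prod_topology T T). bmult (fst z) (snd z) \<in> OV}"
      using m OV(1) unfolding continuous_map_def by blast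
    hence op: "openin (prod_topology T T) {z. bmult (fst z) (snd z) \<in> OV}" using top by simp
    have "bmult (mm,mm) (v,v) = (v,v)" using v(1) by (auto simp: bmult_def)
    hence "((mm,mm),(v,v)) \<in> {z. bmult (fst z) (snd z) \<in> OV}" using v(2) by simp
    with op have "\<exists>A B. openin T A \<and> openin T B \<and> (mm,mm) \<in> A \<and> (v,v) \<in> B \<and>
      A \<times> B \<subseteq> {z. bmult (fst z) (snd z) \<in> OV}"
      unfolding openin_prod_topology_alt by blast
    then obtain A B where AB: "openin T A" "openin T B" "(mm,mm) \<in> A" "(v,v) \<in> B"
      "A \<times> B \<subseteq> {z. bmult (fst z) (snd z) \<in> OV}"
      by blast
    have "openin T (A \<inter> N)" using AB(1) N(1) by blast
    moreover have "(mm,mm) \<in> A \<inter> N" using AB(3) N'(1) N(2) by blast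
    ultimately obtain n where n: "n \<ge> v" "(n,n) \<in> A \<inter> N"
      using infinite_nbhd[OF assms(1,2) noiso, of "A \<inter> N" mm v] by blast
    have "bmult (n,n) (v,v) = (n,n)" using n(1) by (auto simp: bmult_def)
    moreover have "((n,n),(v,v)) \<in> A \<times> B" using AB(4) n(2) by blast
    hence "((n,n),(v,v)) \<in> {z. bmult (fst z) (snd z) \<in> OV}" using AB(5) by (meson subsetD)
    ultimately have "(n,n) \<in> OV" by simp
    hence "(n,n) \<in> V" using OV(2) unfolding bidem_def by auto
    moreover have "(n,n) \<in> N'" using n(2) N(2) unfolding bidem_def by auto
    ultimately show False using N'(3) by blast
  qed
  then obtain k where "openin T {(k,k)}" by blast
  hence "openin T {(0+k,0+k)}" by simp
  hence "openin T {(0,0)}" by (rule shift_open[OF assms(2)])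
  hence "\<forall>x\<in>UNIV. openin T {x}" using all_open[OF assms(1,2)] by auto
  thus ?thesis using top discrete_topology_unique[of UNIV T] by auto
qed

end
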